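(* Let $\varepsilon>0$ and let $s:\Delta_{L-1}\to2^{[L]}$ be a selection rule that is $\varepsilon$-compatible, permutation invariant, and contains the argmax. Then for every $w\in\Delta_{L-1}$ and $j\in[L]$, if $s(w)=\{j\}$ then $\mathrm{argmax}^\varepsilon(w)=\{j\}$.
   Context: $\Delta_{L-1}=\{w\in\mathbb{R}^L:w_i\ge0,\sum_iw_i=1\}$, $\|\cdot\|$ Euclidean norm. $s$ is $\varepsilon$-compatible if $\|v-w\|<\varepsilon$ implies $s(v)\cap s(w)\ne\varnothing$ for all $v,w\in\Delta_{L-1}$. $s$ is permutation invariant if for all $w\in\Delta_{L-1}$ and permutations $\sigma$ of $[L]$, with $v=(w_{\sigma(1)},\dots,w_{\sigma(L)})$, $j\in s(v)\iff\sigma(j)\in s(w)$. $s$ contains the argmax if $\{j:w_j=\max_\ell w_\ell\}\subseteq s(w)$ for all $w$. For $j\in[L]$, $R_j^\varepsilon=\{w\in\mathbb{R}^L: w_j\ge\max_{\ell\neq j}w_\ell+\varepsilon/\sqrt2\}$, and $\mathrm{argmax}^\varepsilon(w)=\{j\in[L]:\mathrm{dist}(w,R_j^\varepsilon)<\varepsilon\}$ with $\mathrm{dist}(w,R)=\inf_{u\in R}\|w-u\|$. *)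

theory Defs
  imports "HOL-Analysis.Analysis"
begin

text \<open>Coordinates are indexed by a finite type 'n, playing the role of [L] with L = CARD('n).\<close>

definition prob_simplex :: "(real ^ 'n) set" where
  "prob_simplex = {w. (\<forall>i. 0 \<le> w $ i) \<and> (\<Sum>i\<in>UNIV. w $ i) = 1}"

definition eps_compatible :: "real \<Rightarrow> (real ^ 'n \<Rightarrow> 'n set) \<Rightarrow> bool" where
  "eps_compatible \<epsilon> s \<longleftrightarrow>
     (\<forall>v\<in>prob_simplex. \<forall>w\<in>prob_simplex. norm (v - w) < \<epsilon> \<longrightarrow> s v \<inter> s w \<noteq> {})"

definition perm_invariant :: "(real ^ 'n \<Rightarrow> 'n set) \<Rightarrow> bool" where
  "perm_invariant s \<longleftrightarrow>
     (\<forall>w\<in>prob_simplex. \<forall>\<sigma>. \<sigma> permutes (UNIV :: 'n set) \<longrightarrow>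
        (\<forall>j. j \<in> s (\<chi> i. w $ \<sigma> i) \<longleftrightarrow> \<sigma> j \<in> s w))"

definition contains_argmax :: "(real ^ 'n \<Rightarrow> 'n set) \<Rightarrow> bool" where
  "contains_argmax s \<longleftrightarrow>
     (\<forall>w\<in>prob_simplex. {j. \<forall>l. w $ l \<le> w $ j} \<subseteq> s w)"

definition R_region :: "real \<Rightarrow> 'n \<Rightarrow> (real ^ 'n) set" where
  "R_region \<epsilon> j = {w. \<forall>l. l \<noteq> j \<longrightarrow> w $ l + \<epsilon> / sqrt 2 \<le> w $ j}"

definition argmax_eps :: "real \<Rightarrow> real ^ 'n \<Rightarrow> 'n set" where
  "argmax_eps \<epsilon> w = {j. infdist w (R_region \<epsilon> j) < \<epsilon>}"

end

theory Submission
  imports Defs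
begin

lemma norm_sq_sum: "(norm (x :: real ^ 'n))^2 = (\<Sum>i\<in>UNIV. (x $ i)^2)"
  by (simp add: norm_vec_def L2_set_def sum_nonneg)

lemma swap_gap:
  fixes w :: "real ^ 'n"
  assumes jk: "j \<noteq> k"
  defines "v \<equiv> (\<chi> i. w $ Transposition.transpose j k i)"
  shows "(norm (v - w))^2 = 2 * (w $ j - w $ k)^2"
proof -
  have "(norm (v - w))^2 = (\<Sum>i\<in>UNIV. ((v - w) $ i)^2)" by (rule norm_sq_sum)
  also have "\<dots> = (\<Sum>i\<in>{j,k}. ((v - w) $ i)^2)"
    by (rule sum.mono_neutral_right) (auto simp: v_def)
  also have "\<dots> = 2 * (w $ j - w $ k)^2" using jk
    by (simp add: v_def power2_eq_square algebra_simps)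
  finally show ?thesis .
qed

lemma far_from_R:
  fixes w u :: "real ^ 'n"
  assumes e: "\<epsilon> > 0" and jk: "j \<noteq> k"
    and wj: "w $ k + \<epsilon> / sqrt 2 \<le> w $ j"
    and uk: "u $ j + \<epsilon> / sqrt 2 \<le> u $ k"
  shows "\<epsilon> \<le> dist w u"
proof -
  define a where "a = w $ j - u $ j"
  define b where "b = w $ k - u $ k"
  have ab: "a - b \<ge> 2 * (\<epsilon> / sqrt 2)" using wj uk by (simp add: a_def b_def)
  have "2 * (\<epsilon> / sqrt 2) = sqrt 2 * \<epsilon>"
    by (simp add: field_simps)
  with ab have ab2: "a - b \<ge> sqrt 2 * \<epsilon>" by simp
  have "(sqrt 2 * \<epsilon>)^2 \<le> (a - b)^2"
    using ab2 e by (intro power_mono) auto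
  hence "2 * \<epsilon>^2 \<le> (a-b)^2" by (simp add: power_mult_distrib)
  moreover have "(a-b)^2 \<le> 2 * (a^2 + b^2)"
    proof -
    have "0 \<le> (a+b)^2" by simp
    thus ?thesis by (simp add: power2_eq_square algebra_simps)
  qed
  ultimately have eab: "\<epsilon>^2 \<le> a^2 + b^2" by simp
  have "(\<Sum>i\<in>{j,k}. ((w - u) $ i)^2) \<le> (\<Sum>i\<in>UNIV. ((w - u) $ i)^2)"
    by (rule sum_mono2) auto
  also have "\<dots> = (norm (w - u))^2" by (rule norm_sq_sum[symmetric])
  finally have "a^2 + b^2 \<le> (norm (w - u))^2" using jk by (simp add: a_def b_def)
  with eab have "\<epsilon>^2 \<le> (norm (w - u))^2" by simp
  hence "\<epsilon> \<le> norm (w - u)" using e by (simp add: power2_le_iff_abs_le)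
  thus ?thesis by (simp add: dist_norm)
qed

theorem proposition4:
  fixes \<epsilon> :: real and s :: "real ^ 'n \<Rightarrow> 'n set"
  assumes "\<epsilon> > 0"
    and "eps_compatible \<epsilon> s"
    and "perm_invariant s"
    and "contains_argmax s"
  shows "\<forall>w\<in>prob_simplex. \<forall>j. s w = {j} \<longrightarrow> argmax_eps \<epsilon> w = {j}"
proof (intro ballI allI impI)
  fix w :: "real ^ 'n" and j
  assume w: "w \<in> prob_simplex" and sw: "s w = {j}"
  have amax: "\<And>l. (\<forall>m. w $ m \<le> w $ l) \<Longrightarrow> l = j"
    using assms(4)[unfolded contains_argmax_def, rule_format, OF w] sw by auto
  have gap: "w $ k + \<epsilon> / sqrt 2 \<le> w $ j" if kj: "k \<noteq> j" for k
  proof (rule ccontr)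
    assume neg: "\<not> ?thesis"
    define \<sigma> where "\<sigma> = Transposition.transpose j k"
    define v where "v = (\<chi> i. w $ \<sigma> i)"
    have perm: "\<sigma> permutes (UNIV :: 'n set)" unfolding \<sigma>_def by (rule permutes_swap_id) auto
    have vs: "v \<in> prob_simplex"
    proof -
      have "(\<Sum>i\<in>UNIV. v $ i) = (\<Sum>i\<in>UNIV. w $ \<sigma> i)" by (simp add: v_def)
      also have "\<dots> = (\<Sum>i\<in>UNIV. w $ i)"
        using sum.permute[OF perm, of "\<lambda>i. w $ i"] by (simp add: comp_def)
      finally show ?thesis using w unfolding prob_simplex_def by (simp add: v_def)
    qed
    have svk: "s v = {k}"
    proof -
      have "\<And>j'. j' \<in> s v \<longleftrightarrow> \<sigma> j' \<in> s w"
        using assms(3)[unfolded perm_invariant_def, rule_format, OF w perm] unfolding v_def by simp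
      moreover have "\<sigma> j' = j \<longleftrightarrow> j' = k" for j'
        unfolding \<sigma>_def using kj
        by (cases "j' = j"; cases "j' = k") auto
      ultimately have "\<And>j'. j' \<in> s v \<longleftrightarrow> j' = k" using sw by blast
      thus ?thesis by blast
    qed
    have wjk: "w $ k \<le> w $ j"
    proof (rule ccontr)
      assume "\<not> w $ k \<le> w $ j"
      hence "w $ j < w $ k" by simp
      define M where "M = Max (range (\<lambda>l. w $ l))"
      have "M \<in> range (\<lambda>l. w $ l)" unfolding M_def by (rule Max_in) auto
      then obtain m where mM: "w $ m = M" by auto
      have m: "\<forall>l. w $ l \<le> w $ m" unfolding mM M_def by (auto intro: Max_ge)
      hence "m = j" using amax by blast
      moreover have "w $ k \<le> w $ m" using m by blast
      ultimately show False using \<open>w $ j < w $ k\<close> by simp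
    qed
    have "(norm (v - w))^2 = 2 * (w $ j - w $ k)^2"
      unfolding v_def \<sigma>_def by (rule swap_gap) (use kj in auto)
    moreover have "w $ j - w $ k < \<epsilon> / sqrt 2" using neg by simp
    hence "(w $ j - w $ k)^2 < (\<epsilon> / sqrt 2)^2" using wjk
      by (intro power_strict_mono) auto
    ultimately have "(norm (v - w))^2 < \<epsilon>^2"
      by (simp add: power_divide)
    hence "norm (v - w) < \<epsilon>"
      by (rule power2_less_imp_less) (use assms(1) in simp)
    hence "s v \<inter> s w \<noteq> {}" using assms(2)[unfolded eps_compatible_def, rule_format, OF vs w] by simp
    thus False using svk sw kj by auto
  qed
  have "j \<in> argmax_eps \<epsilon> w"
  proof -
    have "w \<in> R_region \<epsilon> j" unfolding R_region_def using gap by auto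
    hence "infdist w (R_region \<epsilon> j) = 0" by simp
    thus ?thesis using assms(1) unfolding argmax_eps_def by simp
  qed
  moreover have "k \<notin> argmax_eps \<epsilon> w" if kj: "k \<noteq> j" for k
  proof -
    have ne: "R_region \<epsilon> k \<noteq> {}"
    proof -
      have "(\<chi> i. if i = k then \<epsilon> / sqrt 2 else 0) \<in> R_region \<epsilon> k"
        unfolding R_region_def by auto
      thus ?thesis by blast
    qed
    have "\<epsilon> \<le> infdist w (R_region \<epsilon> k)"
      unfolding infdist_notempty[OF ne]
    proof (rule cINF_greatest[OF ne])
      fix u assume "u \<in> R_region \<epsilon> k"
      hence "u $ j + \<epsilon> / sqrt 2 \<le> u $ k" using kj unfolding R_region_def by auto
      thus "\<epsilon> \<le> dist w u" using far_from_R[OF assms(1), of j k w u] gap[OF kj] kj by auto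
    qed
    thus ?thesis unfolding argmax_eps_def by simp
  qed
  ultimately show "argmax_eps \<epsilon> w = {j}" by (intro set_eqI) (metis singleton_iff)
qed

end
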